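(* Physically incoherent operations preserve $\mathrm{co}(\mathcal U)$: if $\rho\in\mathrm{co}(\mathcal U)$ and $\Lambda$ is a PIO, then $\Lambda(\rho)\in\mathrm{co}(\mathcal U)$.
   Context: Fixed computational basis $\{|i\rangle\}_{i=1}^d$. $\mathcal U_k$ is the set of uniformly coherent states $|\Psi\rangle=k^{-1/2}\sum_{j\in J}e^{i\theta_j}|j\rangle$, $J\subseteq[d]$, $|J|=k$, $\theta_j\in\mathbb R$; $\mathcal U=\bigcup_{k=1}^d\mathcal U_k$ (as density matrices $|\Psi\rangle\langle\Psi|$), and $\mathrm{co}(\mathcal U)$ its convex hull. PIO: channels $X\mapsto\sum_{\alpha,\beta}p_\alpha U_{\alpha,\beta}\Pi_{\beta|\alpha}X\Pi_{\beta|\alpha}U_{\alpha,\beta}^\dagger$ with $p$ a probability distribution, $U_{\alpha,\beta}$ incoherent unitaries (permutation matrix times diagonal unitary), and for each $\alpha$ incoherent projectors $\Pi_{\beta|\alpha}=\sum_{i\in I_{\beta|\alpha}}|i\rangle\langle i|$ summing to the identity. *)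

theory Defs
  imports "HOL-Analysis.Analysis"
begin

text \<open>The computational basis of C^d is indexed by the finite type 'n (d = CARD('n)).
  Density matrices / operators are complex^'n^'n.\<close>

definition ket_bra :: "complex^'n \<Rightarrow> complex^'n^'n" where
  "ket_bra v = (\<chi> i j. v$i * cnj (v$j))"

definition ctrans :: "complex^'n^'n \<Rightarrow> complex^'n^'n" where
  "ctrans M = (\<chi> i j. cnj (M$j$i))"

definition uniformly_coherent :: "nat \<Rightarrow> complex^'n \<Rightarrow> bool" where
  "uniformly_coherent k v \<longleftrightarrow> k \<ge> 1 \<and> (\<exists>(J::'n set) (\<theta>::'n \<Rightarrow> real). card J = k \<and>
     v = (\<chi> j. if j \<in> J then exp (\<i> * complex_of_real (\<theta> j)) / complex_of_real (sqrt (real k)) else 0))"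

definition U_k :: "nat \<Rightarrow> (complex^'n^'n) set" where
  "U_k k = {ket_bra v | v. uniformly_coherent k v}"

definition U_all :: "(complex^'n^'n) set" where
  "U_all = (\<Union>k\<in>{1..CARD('n)}. U_k k)"

definition perm_matrix :: "('n \<Rightarrow> 'n) \<Rightarrow> complex^'n^'n" where
  "perm_matrix \<sigma> = (\<chi> i j. if i = \<sigma> j then 1 else 0)"

definition diag_unitary :: "('n \<Rightarrow> real) \<Rightarrow> complex^'n^'n" where
  "diag_unitary \<theta> = (\<chi> i j. if i = j then exp (\<i> * complex_of_real (\<theta> i)) else 0)"

definition incoherent_unitary :: "complex^'n^'n \<Rightarrow> bool" where
  "incoherent_unitary U \<longleftrightarrow> (\<exists>\<sigma> \<theta>. \<sigma> permutes (UNIV::'n set) \<and> U = perm_matrix \<sigma> ** diag_unitary \<theta>)"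

definition incoh_proj :: "'n set \<Rightarrow> complex^'n^'n" where
  "incoh_proj I = (\<chi> i j. if i = j \<and> i \<in> I then 1 else 0)"

definition PIO :: "(complex^'n^'n \<Rightarrow> complex^'n^'n) \<Rightarrow> bool" where
  "PIO \<Lambda> \<longleftrightarrow> (\<exists>(A::nat set) (p::nat \<Rightarrow> real) (B::nat \<Rightarrow> nat set)
      (I::nat \<Rightarrow> nat \<Rightarrow> 'n set) (U::nat \<Rightarrow> nat \<Rightarrow> complex^'n^'n).
      finite A \<and> (\<forall>\<alpha>\<in>A. p \<alpha> \<ge> 0) \<and> (\<Sum>\<alpha>\<in>A. p \<alpha>) = 1 \<and>
      (\<forall>\<alpha>\<in>A. finite (B \<alpha>) \<and> (\<Sum>\<beta>\<in>B \<alpha>. incoh_proj (I \<alpha> \<beta>)) = mat 1 \<and>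
                (\<forall>\<beta>\<in>B \<alpha>. incoherent_unitary (U \<alpha> \<beta>))) \<and>
      (\<forall>X. \<Lambda> X = (\<Sum>\<alpha>\<in>A. \<Sum>\<beta>\<in>B \<alpha>. p \<alpha> *\<^sub>R
          (U \<alpha> \<beta> ** incoh_proj (I \<alpha> \<beta>) ** X ** incoh_proj (I \<alpha> \<beta>) ** ctrans (U \<alpha> \<beta>)))))"

end

theory Submission
  imports Defs
begin
lemma matrix_add_rdistrib': "((A + B) ** C) = (A ** C) + (B ** (C::'a::semiring_1^'p^'n))"
  by (simp add: matrix_matrix_mult_def vec_eq_iff sum.distrib[symmetric] distrib_right)


definition vecph :: "'n::finite set \<Rightarrow> ('n \<Rightarrow> real) \<Rightarrow> real \<Rightarrow> complex^'n" where
  "vecph S \<phi> r = (\<chi> i. if i \<in> S then exp (\<i> * complex_of_real (\<phi> i)) * complex_of_real r else 0)"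

lemma linear_sandwich: "linear (\<lambda>X::complex^'n::finite^'n. A ** X ** B)"
proof (rule linearI)
  fix X Y :: "complex^'n^'n"
  show "A ** (X + Y) ** B = A ** X ** B + A ** Y ** B"
    by (simp add: matrix_add_ldistrib matrix_add_rdistrib')
next
  fix c :: real and X :: "complex^'n^'n"
  show "A ** (c *\<^sub>R X) ** B = c *\<^sub>R (A ** X ** B)"
    by (simp add: matrix_scalar_ac scalar_matrix_assoc)
qed

lemma ctrans_mult: "ctrans (A ** B) = ctrans B ** ctrans (A::complex^'n::finite^'n)"
  by (simp add: ctrans_def matrix_matrix_mult_def vec_eq_iff mult.commute)

lemma ctrans_proj: "ctrans (incoh_proj I) = incoh_proj I"
  by (simp add: ctrans_def incoh_proj_def vec_eq_iff)

lemma sandwich_ketbra: "A ** ket_bra v ** ctrans A = ket_bra (A *v (v::complex^'n::finite))"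
  apply (simp add: ctrans_def matrix_matrix_mult_def ket_bra_def matrix_vector_mult_def vec_eq_iff
      sum_distrib_left sum_distrib_right)
  apply (intro allI)
  apply (rule sum.cong, simp)
  apply (rule sum.cong, simp)
  apply (simp add: mult_ac)
  done

lemma proj_comp: "(incoh_proj I *v x) $ i = (if i \<in> I then x $ i else 0)"
proof -
  have "(incoh_proj I *v x) $ i = (\<Sum>j\<in>UNIV. if j = i then (if i \<in> I then x $ j else 0) else 0)"
    unfolding incoh_proj_def matrix_vector_mult_def
    by (intro trans[OF vec_lambda_beta] sum.cong refl) auto
  then show ?thesis by simp
qed

lemma diag_comp: "(diag_unitary \<theta> *v x) $ i = exp (\<i> * complex_of_real (\<theta> i)) * x $ i"
proof -
  have "(diag_unitary \<theta> *v x) $ i = (\<Sum>j\<in>UNIV. if j = i then exp (\<i> * complex_of_real (\<theta> i)) * x $ j else 0)"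
    unfolding diag_unitary_def matrix_vector_mult_def
    by (intro trans[OF vec_lambda_beta] sum.cong refl) auto
  then show ?thesis by simp
qed

lemma proj_vecph: "incoh_proj I *v vecph S \<phi> r = vecph (I \<inter> S) \<phi> r"
  by (simp add: vec_eq_iff proj_comp vecph_def)

lemma diag_vecph: "diag_unitary \<theta> *v vecph S \<phi> r = vecph S (\<lambda>i. \<theta> i + \<phi> i) r"
  by (simp add: vec_eq_iff diag_comp vecph_def exp_add[symmetric] distrib_left mult.assoc)

lemma perm_vecph: assumes "\<sigma> permutes UNIV"
  shows "perm_matrix \<sigma> *v vecph S \<phi> r = vecph (\<sigma> ` S) (\<lambda>i. \<phi> (inv \<sigma> i)) r"
proof -
  have e: "(i = \<sigma> j) = (j = inv \<sigma> i)" for i j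
    using assms permutes_inverses by metis
  have m: "(inv \<sigma> i \<in> S) = (i \<in> \<sigma> ` S)" for i
    using assms by (metis image_iff permutes_inverses(1) permutes_inverses(2))
  have "(perm_matrix \<sigma> *v x) $ i = x $ (inv \<sigma> i)" for x i
  proof -
    have "(perm_matrix \<sigma> *v x) $ i = (\<Sum>j\<in>UNIV. if j = inv \<sigma> i then x $ j else 0)"
      unfolding perm_matrix_def matrix_vector_mult_def
      by (intro trans[OF vec_lambda_beta] sum.cong refl) (simp add: e)
    then show ?thesis by simp
  qed
  then show ?thesis by (simp add: vec_eq_iff vecph_def m)
qed

lemma alg_aux: fixes a b :: complex and s r c :: real
  assumes "s * s * c = 1"
  shows "complex_of_real (r^2 * c) * (a * complex_of_real s * (b * complex_of_real s)) = a * complex_of_real r * (b * complex_of_real r)"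
proof -
  have e1: "complex_of_real (r^2 * c) = of_real r * of_real r * of_real c"
    by (simp add: power2_eq_square)
  have e2: "(1::complex) = of_real s * of_real s * of_real c"
    using assms by (metis of_real_1 of_real_mult)
  have e3: "a * of_real r * (b * of_real r) = (of_real s * of_real s * of_real c) * (a * of_real r * (b * of_real r))"
    by (simp only: e2[symmetric] mult_1_left)
  have e4: "(of_real r * of_real r * of_real c) * (a * of_real s * (b * of_real s)) = (of_real s * of_real s * of_real c) * (a * of_real r * (b * (of_real r::complex)))"
    by (simp only: ac_simps)
  show ?thesis unfolding e1 e4 by (rule e3[symmetric])
qed

lemma k_aux: assumes "x > 0" shows "(1 / sqrt x) * (1 / sqrt x) * x = 1"
proof -
  have "sqrt x * sqrt x = x" using assms by simp
  moreover have "sqrt x > 0" using assms by simp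
  ultimately show ?thesis by (metis divide_divide_eq_left div_self mult.commute times_divide_eq_right less_irrefl div_by_1 nonzero_mult_div_cancel_left)
qed

lemma ketbra_gen:
  fixes f :: "'n::finite \<Rightarrow> complex"
  assumes "s * s * c = 1"
  shows "ket_bra (\<chi> i. if i \<in> S then f i * complex_of_real r else 0) = (r^2 * c) *\<^sub>R ket_bra (\<chi> i. if i \<in> S then f i * complex_of_real s else 0)"
proof -
  have "ket_bra (\<chi> i. if i \<in> S then f i * complex_of_real r else 0) $ i $ j = ((r^2 * c) *\<^sub>R ket_bra (\<chi> i. if i \<in> S then f i * complex_of_real s else 0)) $ i $ j" for i j
  proof (cases "i \<in> S \<and> j \<in> S")
    case True
    have sc: "((r^2 * c) *\<^sub>R M) $ i $ j = complex_of_real (r^2 * c) * M $ i $ j" for M :: "complex^'n^'n"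
      by (simp only: vector_scaleR_component, rule scaleR_conv_of_real)
    from True show ?thesis
      unfolding sc by (simp add: ket_bra_def alg_aux[OF assms] del: of_real_mult of_real_power)
  next
    case False
    then show ?thesis by (auto simp add: ket_bra_def)
  qed
  then show ?thesis by (simp add: vec_eq_iff)
qed

lemma vecph_eq: "(\<chi> j. if j \<in> J then exp (\<i> * complex_of_real (\<theta> j)) / complex_of_real (sqrt (real k)) else 0)
   = vecph J \<theta> (1 / sqrt (real k))"
  by (simp add: vecph_def vec_eq_iff divide_inverse of_real_inverse)

lemma in_U_all:
  assumes "S \<noteq> {}"
  shows "ket_bra (vecph (S::'n::finite set) \<phi> (1 / sqrt (real (card S)))) \<in> U_all"
proof -
  have fin: "finite S" by simp
  have c1: "card S \<ge> 1" using assms fin by (simp add: Suc_le_eq card_gt_0_iff)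
  have c2: "card S \<le> CARD('n)" by (simp add: card_mono)
  have "uniformly_coherent (card S) (vecph S \<phi> (1 / sqrt (real (card S))))"
    unfolding uniformly_coherent_def
    by (intro conjI c1 exI[of _ S] exI[of _ \<phi>] refl vecph_eq[symmetric])
  then show ?thesis unfolding U_all_def U_k_def using c1 c2 by auto
qed

lemma uc_vecph:
  assumes "uniformly_coherent k (v::complex^'n::finite)"
  shows "\<exists>J \<theta>. card J = k \<and> k \<ge> 1 \<and> v = vecph J \<theta> (1 / sqrt (real k))"
  using assms unfolding uniformly_coherent_def by (metis vecph_eq)

lemma ket_bra_zero: "ket_bra 0 = 0"
  by (simp add: ket_bra_def vec_eq_iff)

lemma U_all_nonempty: "\<exists>Y. Y \<in> (U_all :: (complex^'n::finite^'n) set)"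
  using in_U_all[of "{undefined::'n}"] by blast

lemma term_lemma:
  fixes U :: "complex^'n::finite^'n"
  assumes "incoherent_unitary U" "card J = k" "k \<ge> 1"
  shows "\<exists>Y\<in>U_all. U ** incoh_proj I ** ket_bra (vecph J \<theta> (1 / sqrt (real k))) ** incoh_proj I ** ctrans U
     = (real (card (I \<inter> J)) / real k) *\<^sub>R Y"
proof -
  obtain \<sigma> \<theta>' where sg: "\<sigma> permutes UNIV" and U: "U = perm_matrix \<sigma> ** diag_unitary \<theta>'"
    using assms(1) unfolding incoherent_unitary_def by blast
  define S' where "S' = \<sigma> ` (I \<inter> J)"
  define \<phi> where "\<phi> = (\<lambda>i. \<theta>' (inv \<sigma> i) + \<theta> (inv \<sigma> i))"
  define K where "K = ket_bra (vecph J \<theta> (1 / sqrt (real k)))"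
  have cS: "card S' = card (I \<inter> J)"
    unfolding S'_def using sg by (meson card_image inj_on_subset permutes_inj subset_UNIV)
  have "U ** incoh_proj I ** K ** incoh_proj I ** ctrans U = (U ** incoh_proj I) ** K ** ctrans (U ** incoh_proj I)"
    by (simp add: ctrans_mult ctrans_proj matrix_mul_assoc)
  also have "\<dots> = ket_bra ((U ** incoh_proj I) *v vecph J \<theta> (1 / sqrt (real k)))"
    unfolding K_def by (rule sandwich_ketbra)
  also have "(U ** incoh_proj I) *v vecph J \<theta> (1 / sqrt (real k)) = vecph S' \<phi> (1 / sqrt (real k))"
    unfolding U S'_def \<phi>_def
    by (simp add: matrix_vector_mul_assoc[symmetric] proj_vecph diag_vecph perm_vecph[OF sg])
  finally have eq: "U ** incoh_proj I ** K ** incoh_proj I ** ctrans U = ket_bra (vecph S' \<phi> (1 / sqrt (real k)))" .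
  show ?thesis
  proof (cases "S' = {}")
    case True
    have "vecph S' \<phi> (1 / sqrt (real k)) = 0" using True by (simp add: vecph_def vec_eq_iff)
    moreover have "card (I \<inter> J) = 0" using cS True by simp
    moreover obtain Y where "Y \<in> (U_all :: (complex^'n^'n) set)" using U_all_nonempty by blast
    ultimately show ?thesis using eq unfolding K_def by (auto simp: ket_bra_zero)
  next
    case False
    have cpos: "real (card S') > 0" using False by (simp add: card_gt_0_iff)
    have kk: "(1 / sqrt (real (card S'))) * (1 / sqrt (real (card S'))) * real (card S') = 1"
      using k_aux[OF cpos] .
    have "ket_bra (vecph S' \<phi> (1 / sqrt (real k))) = ((1 / sqrt (real k))^2 * real (card S')) *\<^sub>R ket_bra (vecph S' \<phi> (1 / sqrt (real (card S'))))"
      unfolding vecph_def by (rule ketbra_gen[OF kk])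
    moreover have "(1 / sqrt (real k))^2 * real (card S') = real (card (I \<inter> J)) / real k"
      using cS assms(3) by (simp add: power_divide)
    ultimately show ?thesis using eq in_U_all[OF False] unfolding K_def by auto
  qed
qed

lemma partition_card:
  fixes I :: "nat \<Rightarrow> 'n::finite set"
  assumes "finite B" "(\<Sum>\<beta>\<in>B. incoh_proj (I \<beta>)) = mat 1"
  shows "(\<Sum>\<beta>\<in>B. real (card (I \<beta> \<inter> J))) = real (card J)"
proof -
  have one: "(\<Sum>\<beta>\<in>B. (if j \<in> I \<beta> then 1 else 0::real)) = 1" for j
  proof -
    have "(\<Sum>\<beta>\<in>B. incoh_proj (I \<beta>)) $ j $ j = 1" using assms(2) by (simp add: mat_def)
    then have "(\<Sum>\<beta>\<in>B. (if j \<in> I \<beta> then 1 else 0::complex)) = 1"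
      by (simp add: incoh_proj_def)
    then have "complex_of_real (\<Sum>\<beta>\<in>B. (if j \<in> I \<beta> then 1 else 0::real)) = complex_of_real 1"
      by (simp add: of_real_sum if_distrib cong: if_cong)
    then show ?thesis using of_real_eq_iff by blast
  qed
  have cd: "real (card (I \<beta> \<inter> J)) = (\<Sum>j\<in>J. if j \<in> I \<beta> then 1 else 0::real)" for \<beta>
  proof -
    have "real (card (I \<beta> \<inter> J)) = real (card (J \<inter> I \<beta>))" by (simp add: Int_commute)
    also have "\<dots> = (\<Sum>j\<in>J \<inter> I \<beta>. 1::real)" by simp
    also have "\<dots> = (\<Sum>j\<in>J. if j \<in> I \<beta> then 1 else 0::real)"
      by (rule sum.inter_restrict) simp
    finally show ?thesis .
  qed
  have "(\<Sum>\<beta>\<in>B. real (card (I \<beta> \<inter> J))) = (\<Sum>\<beta>\<in>B. \<Sum>j\<in>J. if j \<in> I \<beta> then 1 else 0::real)"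
    by (simp add: cd)
  also have "\<dots> = (\<Sum>j\<in>J. \<Sum>\<beta>\<in>B. if j \<in> I \<beta> then 1 else 0::real)"
    by (rule sum.swap)
  also have "\<dots> = real (card J)" by (simp add: one)
  finally show ?thesis .
qed

theorem lemma11:
  fixes \<rho> :: "complex^'n^'n" and \<Lambda> :: "complex^'n^'n \<Rightarrow> complex^'n^'n"
  assumes "\<rho> \<in> convex hull U_all"
    and "PIO \<Lambda>"
  shows "\<Lambda> \<rho> \<in> convex hull U_all"
proof -
  obtain A :: "nat set" and p :: "nat \<Rightarrow> real" and B :: "nat \<Rightarrow> nat set"
    and I :: "nat \<Rightarrow> nat \<Rightarrow> 'n set" and U :: "nat \<Rightarrow> nat \<Rightarrow> complex^'n^'n" where fA: "finite A" and p0: "\<forall>\<alpha>\<in>A. p \<alpha> \<ge> 0" and p1: "(\<Sum>\<alpha>\<in>A. p \<alpha>) = 1"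
    and hB: "\<forall>\<alpha>\<in>A. finite (B \<alpha>) \<and> (\<Sum>\<beta>\<in>B \<alpha>. incoh_proj (I \<alpha> \<beta>)) = mat 1 \<and>
                (\<forall>\<beta>\<in>B \<alpha>. incoherent_unitary (U \<alpha> \<beta>))"
    and L: "\<forall>X. \<Lambda> X = (\<Sum>\<alpha>\<in>A. \<Sum>\<beta>\<in>B \<alpha>. p \<alpha> *\<^sub>R
          (U \<alpha> \<beta> ** incoh_proj (I \<alpha> \<beta>) ** X ** incoh_proj (I \<alpha> \<beta>) ** ctrans (U \<alpha> \<beta>)))"
    using assms(2) unfolding PIO_def by blast
  have lin: "linear \<Lambda>"
  proof (rule linearI)
    fix X Y :: "complex^'n^'n"
    show "\<Lambda> (X + Y) = \<Lambda> X + \<Lambda> Y"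
      unfolding L[rule_format] by (simp add: matrix_add_ldistrib matrix_add_rdistrib' scaleR_add_right sum.distrib)
  next
    fix c :: real and X :: "complex^'n^'n"
    show "\<Lambda> (c *\<^sub>R X) = c *\<^sub>R \<Lambda> X"
      unfolding L[rule_format] by (simp add: matrix_scalar_ac scalar_matrix_assoc scaleR_sum_right mult.commute)
  qed
  have sub: "U_all \<subseteq> \<Lambda> -` (convex hull U_all)"
  proof
    fix X assume "X \<in> (U_all :: (complex^'n^'n) set)"
    then obtain k v where X: "X = ket_bra v" and uc: "uniformly_coherent k v"
      unfolding U_all_def U_k_def by blast
    obtain J \<theta> where cJ: "card J = k" and k1: "k \<ge> 1" and v: "v = vecph J \<theta> (1 / sqrt (real k))"
      using uc_vecph[OF uc] by blast
    define w where "w = (\<lambda>\<alpha> \<beta>. real (card (I \<alpha> \<beta> \<inter> J)) / real k)"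
    define T where "T = (\<lambda>\<alpha> \<beta>. U \<alpha> \<beta> ** incoh_proj (I \<alpha> \<beta>) ** X ** incoh_proj (I \<alpha> \<beta>) ** ctrans (U \<alpha> \<beta>))"
    define Yf where "Yf = (\<lambda>\<alpha> \<beta>. SOME Y. Y \<in> U_all \<and> T \<alpha> \<beta> = w \<alpha> \<beta> *\<^sub>R Y)"
    have Yf: "Yf \<alpha> \<beta> \<in> U_all \<and> T \<alpha> \<beta> = w \<alpha> \<beta> *\<^sub>R Yf \<alpha> \<beta>" if "\<alpha> \<in> A" "\<beta> \<in> B \<alpha>" for \<alpha> \<beta>
    proof -
      have "\<exists>Y\<in>U_all. T \<alpha> \<beta> = w \<alpha> \<beta> *\<^sub>R Y"
        unfolding T_def w_def X v using term_lemma[OF _ cJ k1] hB that by blast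
      then have "\<exists>Y. Y \<in> U_all \<and> T \<alpha> \<beta> = w \<alpha> \<beta> *\<^sub>R Y" by blast
      then show ?thesis unfolding Yf_def by (rule someI_ex)
    qed
    have "\<Lambda> X = (\<Sum>\<alpha>\<in>A. \<Sum>\<beta>\<in>B \<alpha>. p \<alpha> *\<^sub>R T \<alpha> \<beta>)" unfolding L[rule_format] T_def ..
    also have "\<dots> = (\<Sum>\<alpha>\<in>A. \<Sum>\<beta>\<in>B \<alpha>. (p \<alpha> * w \<alpha> \<beta>) *\<^sub>R Yf \<alpha> \<beta>)"
      by (intro sum.cong refl) (simp add: Yf)
    also have "\<dots> = (\<Sum>x\<in>Sigma A B. (p (fst x) * w (fst x) (snd x)) *\<^sub>R Yf (fst x) (snd x))"
      by (subst sum.Sigma) (use fA hB in \<open>auto simp: split_beta\<close>)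
    also have "\<dots> \<in> convex hull U_all"
    proof (rule convex_sum)
      show "finite (Sigma A B)" using fA hB by auto
      show "convex (convex hull U_all)" by simp
      show "(\<Sum>x\<in>Sigma A B. p (fst x) * w (fst x) (snd x)) = 1"
      proof -
        have "(\<Sum>x\<in>Sigma A B. p (fst x) * w (fst x) (snd x)) = (\<Sum>\<alpha>\<in>A. \<Sum>\<beta>\<in>B \<alpha>. p \<alpha> * w \<alpha> \<beta>)"
          by (subst sum.Sigma) (use fA hB in \<open>auto simp: split_beta\<close>)
        also have "\<dots> = (\<Sum>\<alpha>\<in>A. p \<alpha>)"
        proof (rule sum.cong[OF refl])
          fix \<alpha> assume a: "\<alpha> \<in> A"
          have "(\<Sum>\<beta>\<in>B \<alpha>. w \<alpha> \<beta>) = (\<Sum>\<beta>\<in>B \<alpha>. real (card (I \<alpha> \<beta> \<inter> J))) / real k"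
            unfolding w_def by (simp add: sum_divide_distrib)
          also have "\<dots> = 1" using partition_card[of "B \<alpha>" "I \<alpha>" J] hB a cJ k1 by simp
          finally show "(\<Sum>\<beta>\<in>B \<alpha>. p \<alpha> * w \<alpha> \<beta>) = p \<alpha>" by (simp add: sum_distrib_left[symmetric])
        qed
        finally show ?thesis using p1 by simp
      qed
      show "\<And>i. i \<in> Sigma A B \<Longrightarrow> 0 \<le> p (fst i) * w (fst i) (snd i)"
        using p0 unfolding w_def by auto
      show "\<And>i. i \<in> Sigma A B \<Longrightarrow> Yf (fst i) (snd i) \<in> convex hull U_all"
        using Yf by (auto intro: hull_inc)
    qed
    finally show "X \<in> \<Lambda> -` (convex hull U_all)" by simp
  qed
  have "convex (\<Lambda> -` (convex hull U_all))"
    by (rule convex_linear_vimage[OF lin]) simp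
  then have "convex hull U_all \<subseteq> \<Lambda> -` (convex hull U_all)"
    using sub by (rule hull_minimal[rotated])
  then show ?thesis using assms(1) by auto
qed
end
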